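(* Let $\mathcal{M}$ be a model category with localization functor $h:\mathcal{M}\to\mathbf{Ho}(\mathcal{M})$. If two diagrams $F:\underline{I}\to\mathcal{M}$ and $G:\underline{J}\to\mathcal{M}$ (objects of $\mathrm{diag}(\mathcal{M})$) are related by a span $F\leftarrow H\rightarrow G$ in $\mathrm{diag}(\mathcal{M})$ of maps which are open up to homotopy, then $F$ and $G$ are bisimilar up to homotopy.
   Context: For a category $\mathcal{K}$, $\mathrm{diag}(\mathcal{K})$ has as objects functors $F:\underline{I}\to\mathcal{K}$ from small categories; a morphism from $F:\underline{I}_1\to\mathcal{K}$ to $G:\underline{I}_2\to\mathcal{K}$ is a pair $(f,\mu)$ with $f:\underline{I}_1\to\underline{I}_2$ a functor and $\mu:F\Rightarrow G\circ f$ a natural transformation; composition $(g,\nu)(f,\mu)=(gf,(\nu f)\odot\mu)$. A morphism $(f,\mu):F\to G$ is open if $f$ is surjective on objects, every morphism $f(i)\to j'$ of $\underline{I}_2$ is the image $f(\phi)$ of some morphism $\phi:i\to j$ of $\underline{I}_1$, and $\mu$ is a natural isomorphism. Two objects $F:\underline{I}\to\mathcal{K}$, $G:\underline{J}\to\mathcal{K}$ are bisimilar if there is a set $\mathcal{R}$ of triples $(i,\eta,j)$, $i\in\underline{I}$, $j\in\underline{J}$, $\eta:F(i)\cong G(j)$ an isomorphism, such that every object of $\underline{I}$ and every object of $\underline{J}$ occurs in some triple; for every $(i,\eta,j)\in\mathcal{R}$ and $\phi:i\to i'$ there are $(i',\eta',j')\in\mathcal{R}$ and $\psi:j\to j'$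 with $\eta'F(\phi)=G(\psi)\eta$; and symmetrically for every $(i,\eta,j)\in\mathcal{R}$ and $\psi:j\to j'$ there are $(i',\eta',j')\in\mathcal{R}$ and $\phi:i\to i'$ with $\eta'F(\phi)=G(\psi)\eta$. A morphism $(f,\mu):F\to G$ of $\mathrm{diag}(\mathcal{M})$ is open up to homotopy if $(f,h\mu):h\circ F\to h\circ G$ is open in $\mathrm{diag}(\mathbf{Ho}(\mathcal{M}))$; $F,G$ are bisimilar up to homotopy if $h\circ F$ and $h\circ G$ are bisimilar. *)

theory Defs
  imports Main
begin

text \<open>A category with object type 'o and arrow type 'a. cmp g f is g after f,
  defined when cd f = dm g.\<close>
record ('o,'a) cat =
  ob  :: "'o set"
  ar  :: "'a set"
  dm  :: "'a \<Rightarrow> 'o"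
  cd  :: "'a \<Rightarrow> 'o"
  idn :: "'o \<Rightarrow> 'a"
  cmp :: "'a \<Rightarrow> 'a \<Rightarrow> 'a"

definition is_category :: "('o,'a) cat \<Rightarrow> bool" where
  "is_category C \<longleftrightarrow>
     (\<forall>f\<in>ar C. dm C f \<in> ob C \<and> cd C f \<in> ob C) \<and>
     (\<forall>x\<in>ob C. idn C x \<in> ar C \<and> dm C (idn C x) = x \<and> cd C (idn C x) = x) \<and>
     (\<forall>f\<in>ar C. \<forall>g\<in>ar C. cd C f = dm C g \<longrightarrow>
        cmp C g f \<in> ar C \<and> dm C (cmp C g f) = dm C f \<and> cd C (cmp C g f) = cd C g) \<and>
     (\<forall>f\<in>ar C. cmp C f (idn C (dm C f)) = f \<and> cmp C (idn C (cd C f)) f = f) \<and>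
     (\<forall>f\<in>ar C. \<forall>g\<in>ar C. \<forall>k\<in>ar C. cd C f = dm C g \<longrightarrow> cd C g = dm C k \<longrightarrow>
        cmp C k (cmp C g f) = cmp C (cmp C k g) f)"

definition hom_arr :: "('o,'a) cat \<Rightarrow> 'a \<Rightarrow> 'o \<Rightarrow> 'o \<Rightarrow> bool" where
  "hom_arr C f x y \<longleftrightarrow> f \<in> ar C \<and> dm C f = x \<and> cd C f = y"

definition is_iso :: "('o,'a) cat \<Rightarrow> 'a \<Rightarrow> bool" where
  "is_iso C f \<longleftrightarrow> f \<in> ar C \<and>
     (\<exists>g. hom_arr C g (cd C f) (dm C f) \<and>
          cmp C g f = idn C (dm C f) \<and> cmp C f g = idn C (cd C f))"

record ('o1,'a1,'o2,'a2) ftor =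
  fo :: "'o1 \<Rightarrow> 'o2"
  fa :: "'a1 \<Rightarrow> 'a2"

definition is_functor :: "('o1,'a1) cat \<Rightarrow> ('o2,'a2) cat \<Rightarrow> ('o1,'a1,'o2,'a2) ftor \<Rightarrow> bool" where
  "is_functor C D F \<longleftrightarrow> is_category C \<and> is_category D \<and>
     (\<forall>x\<in>ob C. fo F x \<in> ob D) \<and>
     (\<forall>f\<in>ar C. hom_arr D (fa F f) (fo F (dm C f)) (fo F (cd C f))) \<and>
     (\<forall>x\<in>ob C. fa F (idn C x) = idn D (fo F x)) \<and>
     (\<forall>f\<in>ar C. \<forall>g\<in>ar C. cd C f = dm C g \<longrightarrow> fa F (cmp C g f) = cmp D (fa F g) (fa F f))"

definition fcomp :: "('o2,'a2,'o3,'a3) ftor \<Rightarrow> ('o1,'a1,'o2,'a2) ftor \<Rightarrow> ('o1,'a1,'o3,'a3) ftor" where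
  "fcomp G F = \<lparr>fo = fo G \<circ> fo F, fa = fa G \<circ> fa F\<rparr>"

definition feq :: "('o1,'a1) cat \<Rightarrow> ('o1,'a1,'o2,'a2) ftor \<Rightarrow> ('o1,'a1,'o2,'a2) ftor \<Rightarrow> bool" where
  "feq C F G \<longleftrightarrow> (\<forall>x\<in>ob C. fo F x = fo G x) \<and> (\<forall>f\<in>ar C. fa F f = fa G f)"

definition is_nat_trans :: "('o1,'a1) cat \<Rightarrow> ('o2,'a2) cat \<Rightarrow> ('o1,'a1,'o2,'a2) ftor
     \<Rightarrow> ('o1,'a1,'o2,'a2) ftor \<Rightarrow> ('o1 \<Rightarrow> 'a2) \<Rightarrow> bool" where
  "is_nat_trans C D F G mu \<longleftrightarrow> is_functor C D F \<and> is_functor C D G \<and>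
     (\<forall>x\<in>ob C. hom_arr D (mu x) (fo F x) (fo G x)) \<and>
     (\<forall>f\<in>ar C. cmp D (mu (cd C f)) (fa F f) = cmp D (fa G f) (mu (dm C f)))"

definition is_nat_iso :: "('o1,'a1) cat \<Rightarrow> ('o2,'a2) cat \<Rightarrow> ('o1,'a1,'o2,'a2) ftor
     \<Rightarrow> ('o1,'a1,'o2,'a2) ftor \<Rightarrow> ('o1 \<Rightarrow> 'a2) \<Rightarrow> bool" where
  "is_nat_iso C D F G mu \<longleftrightarrow> is_nat_trans C D F G mu \<and> (\<forall>x\<in>ob C. is_iso D (mu x))"

definition has_terminal :: "('o,'a) cat \<Rightarrow> bool" where
  "has_terminal C \<longleftrightarrow> (\<exists>t\<in>ob C. \<forall>x\<in>ob C. \<exists>!f. hom_arr C f x t)"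

definition has_initial :: "('o,'a) cat \<Rightarrow> bool" where
  "has_initial C \<longleftrightarrow> (\<exists>t\<in>ob C. \<forall>x\<in>ob C. \<exists>!f. hom_arr C f t x)"

definition has_pullbacks :: "('o,'a) cat \<Rightarrow> bool" where
  "has_pullbacks C \<longleftrightarrow>
     (\<forall>f\<in>ar C. \<forall>g\<in>ar C. cd C f = cd C g \<longrightarrow>
       (\<exists>P p1 p2. hom_arr C p1 P (dm C f) \<and> hom_arr C p2 P (dm C g) \<and>
          cmp C f p1 = cmp C g p2 \<and>
          (\<forall>Q q1 q2. hom_arr C q1 Q (dm C f) \<and> hom_arr C q2 Q (dm C g) \<and>
               cmp C f q1 = cmp C g q2 \<longrightarrow>
             (\<exists>!u. hom_arr C u Q P \<and> cmp C p1 u = q1 \<and> cmp C p2 u = q2))))"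

definition has_pushouts :: "('o,'a) cat \<Rightarrow> bool" where
  "has_pushouts C \<longleftrightarrow>
     (\<forall>f\<in>ar C. \<forall>g\<in>ar C. dm C f = dm C g \<longrightarrow>
       (\<exists>P p1 p2. hom_arr C p1 (cd C f) P \<and> hom_arr C p2 (cd C g) P \<and>
          cmp C p1 f = cmp C p2 g \<and>
          (\<forall>Q q1 q2. hom_arr C q1 (cd C f) Q \<and> hom_arr C q2 (cd C g) Q \<and>
               cmp C q1 f = cmp C q2 g \<longrightarrow>
             (\<exists>!u. hom_arr C u P Q \<and> cmp C u p1 = q1 \<and> cmp C u p2 = q2))))"

definition is_retract :: "('o,'a) cat \<Rightarrow> 'a \<Rightarrow> 'a \<Rightarrow> bool" where
  "is_retract C f g \<longleftrightarrow> f \<in> ar C \<and> g \<in> ar C \<and>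
     (\<exists>i r i' r'. hom_arr C i (dm C f) (dm C g) \<and> hom_arr C r (dm C g) (dm C f) \<and>
        hom_arr C i' (cd C f) (cd C g) \<and> hom_arr C r' (cd C g) (cd C f) \<and>
        cmp C r i = idn C (dm C f) \<and> cmp C r' i' = idn C (cd C f) \<and>
        cmp C g i = cmp C i' f \<and> cmp C f r = cmp C r' g)"

definition llp :: "('o,'a) cat \<Rightarrow> 'a \<Rightarrow> 'a \<Rightarrow> bool" where
  "llp C i p \<longleftrightarrow>
     (\<forall>u v. hom_arr C u (dm C i) (dm C p) \<and> hom_arr C v (cd C i) (cd C p) \<and>
            cmp C p u = cmp C v i \<longrightarrow>
        (\<exists>l. hom_arr C l (cd C i) (dm C p) \<and> cmp C l i = u \<and> cmp C p l = v))"

definition arrow_class :: "('o,'a) cat \<Rightarrow> 'a set \<Rightarrow> bool" where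
  "arrow_class C S \<longleftrightarrow> S \<subseteq> ar C \<and> (\<forall>x\<in>ob C. idn C x \<in> S) \<and>
     (\<forall>f\<in>S. \<forall>g\<in>S. cd C f = dm C g \<longrightarrow> cmp C g f \<in> S) \<and>
     (\<forall>f\<in>ar C. \<forall>g\<in>S. is_retract C f g \<longrightarrow> f \<in> S)"

definition model_category :: "('o,'a) cat \<Rightarrow> 'a set \<Rightarrow> 'a set \<Rightarrow> 'a set \<Rightarrow> bool" where
  "model_category C W Fib Cof \<longleftrightarrow> is_category C \<and>
     has_terminal C \<and> has_pullbacks C \<and> has_initial C \<and> has_pushouts C \<and>
     arrow_class C W \<and> arrow_class C Fib \<and> arrow_class C Cof \<and>
     (\<forall>f\<in>ar C. \<forall>g\<in>ar C. cd C f = dm C g \<longrightarrow>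
        ((f \<in> W \<and> g \<in> W \<longrightarrow> cmp C g f \<in> W) \<and>
         (f \<in> W \<and> cmp C g f \<in> W \<longrightarrow> g \<in> W) \<and>
         (g \<in> W \<and> cmp C g f \<in> W \<longrightarrow> f \<in> W))) \<and>
     (\<forall>i\<in>Cof. \<forall>p\<in>Fib \<inter> W. llp C i p) \<and>
     (\<forall>i\<in>Cof \<inter> W. \<forall>p\<in>Fib. llp C i p) \<and>
     (\<forall>f\<in>ar C. \<exists>i p. i \<in> Cof \<inter> W \<and> p \<in> Fib \<and> cd C i = dm C p \<and> cmp C p i = f) \<and>
     (\<forall>f\<in>ar C. \<exists>i p. i \<in> Cof \<and> p \<in> Fib \<inter> W \<and> cd C i = dm C p \<and> cmp C p i = f)"

text \<open>h : M \<rightarrow> Ho is a localization of M at W: it inverts W and is universal among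
  W-inverting functors (into categories of the same object/arrow types as Ho).\<close>
definition inverts :: "('o,'a) cat \<Rightarrow> 'a set \<Rightarrow> ('o2,'a2) cat \<Rightarrow> ('o,'a,'o2,'a2) ftor \<Rightarrow> bool" where
  "inverts M W D F \<longleftrightarrow> is_functor M D F \<and> (\<forall>w\<in>W. is_iso D (fa F w))"

definition is_localization :: "('o,'a) cat \<Rightarrow> 'a set \<Rightarrow> ('ho,'ha) cat \<Rightarrow> ('o,'a,'ho,'ha) ftor \<Rightarrow> bool" where
  "is_localization M W Ho h \<longleftrightarrow> inverts M W Ho h \<and>
     (\<forall>(D :: ('ho,'ha) cat) F. inverts M W D F \<longrightarrow>
        (\<exists>G. is_functor Ho D G \<and> feq M (fcomp G h) F \<and>
             (\<forall>G'. is_functor Ho D G' \<and> feq M (fcomp G' h) F \<longrightarrow> feq Ho G' G)))"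

text \<open>A diagram F : I \<rightarrow> K (I a small category: all HOL sets are small).\<close>
definition is_diagram :: "('i,'ia) cat \<Rightarrow> ('o,'a) cat \<Rightarrow> ('i,'ia,'o,'a) ftor \<Rightarrow> bool" where
  "is_diagram I K F \<longleftrightarrow> is_functor I K F"

definition diag_morphism :: "('o,'a) cat \<Rightarrow> ('i1,'ia1) cat \<Rightarrow> ('i1,'ia1,'o,'a) ftor
     \<Rightarrow> ('i2,'ia2) cat \<Rightarrow> ('i2,'ia2,'o,'a) ftor
     \<Rightarrow> ('i1,'ia1,'i2,'ia2) ftor \<Rightarrow> ('i1 \<Rightarrow> 'a) \<Rightarrow> bool" where
  "diag_morphism K I1 F I2 G f mu \<longleftrightarrow>
     is_diagram I1 K F \<and> is_diagram I2 K G \<and> is_functor I1 I2 f \<and>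
     is_nat_trans I1 K F (fcomp G f) mu"

definition diag_open :: "('o,'a) cat \<Rightarrow> ('i1,'ia1) cat \<Rightarrow> ('i1,'ia1,'o,'a) ftor
     \<Rightarrow> ('i2,'ia2) cat \<Rightarrow> ('i2,'ia2,'o,'a) ftor
     \<Rightarrow> ('i1,'ia1,'i2,'ia2) ftor \<Rightarrow> ('i1 \<Rightarrow> 'a) \<Rightarrow> bool" where
  "diag_open K I1 F I2 G f mu \<longleftrightarrow>
     diag_morphism K I1 F I2 G f mu \<and>
     fo f ` ob I1 = ob I2 \<and>
     (\<forall>i\<in>ob I1. \<forall>b\<in>ar I2. dm I2 b = fo f i \<longrightarrow>
        (\<exists>\<phi>\<in>ar I1. dm I1 \<phi> = i \<and> fa f \<phi> = b)) \<and>
     is_nat_iso I1 K F (fcomp G f) mu"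

definition bisimilar :: "('o,'a) cat \<Rightarrow> ('i,'ia) cat \<Rightarrow> ('i,'ia,'o,'a) ftor
     \<Rightarrow> ('j,'ja) cat \<Rightarrow> ('j,'ja,'o,'a) ftor \<Rightarrow> bool" where
  "bisimilar K I F J G \<longleftrightarrow>
     (\<exists>R :: ('i \<times> 'a \<times> 'j) set.
        (\<forall>(i,\<eta>,j)\<in>R. i \<in> ob I \<and> j \<in> ob J \<and> hom_arr K \<eta> (fo F i) (fo G j) \<and> is_iso K \<eta>) \<and>
        (\<forall>i\<in>ob I. \<exists>\<eta> j. (i,\<eta>,j) \<in> R) \<and>
        (\<forall>j\<in>ob J. \<exists>i \<eta>. (i,\<eta>,j) \<in> R) \<and>
        (\<forall>(i,\<eta>,j)\<in>R. \<forall>\<phi>\<in>ar I. dm I \<phi> = i \<longrightarrow>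
           (\<exists>\<eta>' j' \<psi>. (cd I \<phi>, \<eta>', j') \<in> R \<and> hom_arr J \<psi> j j' \<and>
               cmp K \<eta>' (fa F \<phi>) = cmp K (fa G \<psi>) \<eta>)) \<and>
        (\<forall>(i,\<eta>,j)\<in>R. \<forall>\<psi>\<in>ar J. dm J \<psi> = j \<longrightarrow>
           (\<exists>i' \<eta>' \<phi>. (i', \<eta>', cd J \<psi>) \<in> R \<and> hom_arr I \<phi> i i' \<and>
               cmp K \<eta>' (fa F \<phi>) = cmp K (fa G \<psi>) \<eta>)))"

definition open_up_to_htpy :: "('o,'a) cat \<Rightarrow> ('ho,'ha) cat \<Rightarrow> ('o,'a,'ho,'ha) ftor
     \<Rightarrow> ('i1,'ia1) cat \<Rightarrow> ('i1,'ia1,'o,'a) ftor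
     \<Rightarrow> ('i2,'ia2) cat \<Rightarrow> ('i2,'ia2,'o,'a) ftor
     \<Rightarrow> ('i1,'ia1,'i2,'ia2) ftor \<Rightarrow> ('i1 \<Rightarrow> 'a) \<Rightarrow> bool" where
  "open_up_to_htpy M Ho h I1 F I2 G f mu \<longleftrightarrow>
     diag_morphism M I1 F I2 G f mu \<and>
     diag_open Ho I1 (fcomp h F) I2 (fcomp h G) f (\<lambda>i. fa h (mu i))"

definition bisimilar_up_to_htpy :: "('o,'a) cat \<Rightarrow> ('ho,'ha) cat \<Rightarrow> ('o,'a,'ho,'ha) ftor
     \<Rightarrow> ('i,'ia) cat \<Rightarrow> ('i,'ia,'o,'a) ftor \<Rightarrow> ('j,'ja) cat \<Rightarrow> ('j,'ja,'o,'a) ftor \<Rightarrow> bool" where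
  "bisimilar_up_to_htpy M Ho h I F J G \<longleftrightarrow> bisimilar Ho I (fcomp h F) J (fcomp h G)"

end

theory Submission imports Defs begin

definition inv_arr :: "('o,'a) cat \<Rightarrow> 'a \<Rightarrow> 'a" where
  "inv_arr C a = (SOME g. hom_arr C g (cd C a) (dm C a) \<and> cmp C g a = idn C (dm C a) \<and> cmp C a g = idn C (cd C a))"

lemma inv_arr_props:
  assumes "is_iso C a"
  shows "hom_arr C (inv_arr C a) (cd C a) (dm C a) \<and> cmp C (inv_arr C a) a = idn C (dm C a) \<and> cmp C a (inv_arr C a) = idn C (cd C a)"
  using assms unfolding is_iso_def inv_arr_def by (metis (mono_tags, lifting) someI_ex)

lemma cat_comp: "is_category C \<Longrightarrow> hom_arr C f x y \<Longrightarrow> hom_arr C g y z \<Longrightarrow> hom_arr C (cmp C g f) x z"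
  unfolding is_category_def hom_arr_def by metis

lemma cat_assoc: "is_category C \<Longrightarrow> hom_arr C f x y \<Longrightarrow> hom_arr C g y z \<Longrightarrow> hom_arr C k z w \<Longrightarrow>
   cmp C k (cmp C g f) = cmp C (cmp C k g) f"
  unfolding is_category_def hom_arr_def by metis

lemma cat_idl: "is_category C \<Longrightarrow> hom_arr C f x y \<Longrightarrow> cmp C (idn C y) f = f"
  unfolding is_category_def hom_arr_def by metis
lemma cat_idr: "is_category C \<Longrightarrow> hom_arr C f x y \<Longrightarrow> cmp C f (idn C x) = f"
  unfolding is_category_def hom_arr_def by metis

lemma inv_iso: assumes "is_category C" "is_iso C a" shows "is_iso C (inv_arr C a)"
proof -
  have h: "hom_arr C (inv_arr C a) (cd C a) (dm C a)" "cmp C (inv_arr C a) a = idn C (dm C a)" "cmp C a (inv_arr C a) = idn C (cd C a)"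
    using inv_arr_props[OF assms(2)] by auto
  have "hom_arr C a (dm C a) (cd C a)" using assms(2) unfolding is_iso_def hom_arr_def by auto
  then show ?thesis using h unfolding is_iso_def hom_arr_def by metis
qed

lemma comp_iso: assumes C: "is_category C" and a: "is_iso C a" "hom_arr C a x y" and b: "is_iso C b" "hom_arr C b y z"
  shows "is_iso C (cmp C b a)"
proof -
  obtain a' where a': "hom_arr C a' y x" "cmp C a' a = idn C x" "cmp C a a' = idn C y"
    using a unfolding is_iso_def hom_arr_def by auto
  obtain b' where b': "hom_arr C b' z y" "cmp C b' b = idn C y" "cmp C b b' = idn C z"
    using b unfolding is_iso_def hom_arr_def by auto
  have ba: "hom_arr C (cmp C b a) x z" using cat_comp[OF C a(2) b(2)] .
  have ab': "hom_arr C (cmp C a' b') z x" using cat_comp[OF C b'(1) a'(1)] .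
  have 1: "cmp C (cmp C a' b') (cmp C b a) = idn C x"
  proof -
    have "cmp C (cmp C a' b') (cmp C b a) = cmp C (cmp C (cmp C a' b') b) a"
      using cat_assoc[OF C a(2) b(2) ab'] .
    also have "cmp C (cmp C a' b') b = cmp C a' (cmp C b' b)"
      using cat_assoc[OF C b(2) b'(1) a'(1)] by simp
    also have "\<dots> = a'" using b'(2) cat_idr[OF C a'(1)] by simp
    finally show ?thesis using a'(2) by simp
  qed
  have 2: "cmp C (cmp C b a) (cmp C a' b') = idn C z"
  proof -
    have "cmp C (cmp C b a) (cmp C a' b') = cmp C (cmp C (cmp C b a) a') b'"
      using cat_assoc[OF C b'(1) a'(1) ba] .
    also have "cmp C (cmp C b a) a' = cmp C b (cmp C a a')"
      using cat_assoc[OF C a'(1) a(2) b(2)] by simp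
    also have "\<dots> = b" using a'(3) cat_idr[OF C b(2)] by simp
    finally show ?thesis using b'(3) by simp
  qed
  show ?thesis using ba ab' 1 2 unfolding is_iso_def hom_arr_def by metis
qed

lemma key:
  assumes C: "is_category C"
    and a: "hom_arr C a x y" "is_iso C a" and a': "hom_arr C a' x' y'" "is_iso C a'"
    and b: "hom_arr C b x z" and b': "hom_arr C b' x' z'"
    and p: "hom_arr C p x x'" and q: "hom_arr C q y y'" and r: "hom_arr C r z z'"
    and e1: "cmp C a' p = cmp C q a" and e2: "cmp C b' p = cmp C r b"
  shows "cmp C (cmp C b' (inv_arr C a')) q = cmp C r (cmp C b (inv_arr C a))"
proof -
  have ia: "hom_arr C (inv_arr C a) y x" "cmp C (inv_arr C a) a = idn C x" "cmp C a (inv_arr C a) = idn C y"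
    using inv_arr_props[OF a(2)] a(1) unfolding hom_arr_def by auto
  have ia': "hom_arr C (inv_arr C a') y' x'" "cmp C (inv_arr C a') a' = idn C x'" "cmp C a' (inv_arr C a') = idn C y'"
    using inv_arr_props[OF a'(2)] a'(1) unfolding hom_arr_def by auto
  have s1: "cmp C (inv_arr C a') q = cmp C p (inv_arr C a)"
  proof -
    have "cmp C (inv_arr C a') q = cmp C (inv_arr C a') (cmp C q (cmp C a (inv_arr C a)))"
      using ia(3) cat_idr[OF C q] by simp
    also have "\<dots> = cmp C (inv_arr C a') (cmp C (cmp C q a) (inv_arr C a))"
      using cat_assoc[OF C ia(1) a(1) q] by simp
    also have "\<dots> = cmp C (inv_arr C a') (cmp C (cmp C a' p) (inv_arr C a))" using e1 by simp
    also have "\<dots> = cmp C (inv_arr C a') (cmp C a' (cmp C p (inv_arr C a)))"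
      using cat_assoc[OF C ia(1) p a'(1)] by simp
    also have "\<dots> = cmp C (cmp C (inv_arr C a') a') (cmp C p (inv_arr C a))"
      using cat_assoc[OF C cat_comp[OF C ia(1) p] a'(1) ia'(1)] .
    also have "\<dots> = cmp C p (inv_arr C a)" using ia'(2) cat_idl[OF C cat_comp[OF C ia(1) p]] by simp
    finally show ?thesis .
  qed
  have "cmp C (cmp C b' (inv_arr C a')) q = cmp C b' (cmp C (inv_arr C a') q)"
    using cat_assoc[OF C q ia'(1) b'] by simp
  also have "\<dots> = cmp C b' (cmp C p (inv_arr C a))" using s1 by simp
  also have "\<dots> = cmp C (cmp C b' p) (inv_arr C a)" using cat_assoc[OF C ia(1) p b'] .
  also have "\<dots> = cmp C (cmp C r b) (inv_arr C a)" using e2 by simp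
  also have "\<dots> = cmp C r (cmp C b (inv_arr C a))" using cat_assoc[OF C ia(1) b r] by simp
  finally show ?thesis .
qed


lemma span_bisim:
  assumes of: "diag_open K L H I F f \<alpha>" and og: "diag_open K L H J G g \<beta>"
  shows "bisimilar K I F J G"
proof -
  have fF: "is_functor L I f" and gF: "is_functor L J g" and HF: "is_functor L K H"
    and FF: "is_functor I K F" and GF: "is_functor J K G"
    using of og unfolding diag_open_def diag_morphism_def is_diagram_def by auto
  have C: "is_category K" using HF unfolding is_functor_def by auto
  have na: "is_nat_iso L K H (fcomp F f) \<alpha>" and nb: "is_nat_iso L K H (fcomp G g) \<beta>"
    using of og unfolding diag_open_def by auto
  have ah: "\<And>l. l \<in> ob L \<Longrightarrow> hom_arr K (\<alpha> l) (fo H l) (fo F (fo f l)) \<and> is_iso K (\<alpha> l)"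
    using na unfolding is_nat_iso_def is_nat_trans_def fcomp_def by auto
  have bh: "\<And>l. l \<in> ob L \<Longrightarrow> hom_arr K (\<beta> l) (fo H l) (fo G (fo g l)) \<and> is_iso K (\<beta> l)"
    using nb unfolding is_nat_iso_def is_nat_trans_def fcomp_def by auto
  have an: "\<And>\<phi>. \<phi> \<in> ar L \<Longrightarrow> cmp K (\<alpha> (cd L \<phi>)) (fa H \<phi>) = cmp K (fa F (fa f \<phi>)) (\<alpha> (dm L \<phi>))"
    using na unfolding is_nat_iso_def is_nat_trans_def fcomp_def by auto
  have bn: "\<And>\<phi>. \<phi> \<in> ar L \<Longrightarrow> cmp K (\<beta> (cd L \<phi>)) (fa H \<phi>) = cmp K (fa G (fa g \<phi>)) (\<beta> (dm L \<phi>))"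
    using nb unfolding is_nat_iso_def is_nat_trans_def fcomp_def by auto
  have Ldm: "\<And>\<phi>. \<phi> \<in> ar L \<Longrightarrow> dm L \<phi> \<in> ob L \<and> cd L \<phi> \<in> ob L"
    using HF unfolding is_functor_def is_category_def by auto
  have Hh: "\<And>\<phi>. \<phi> \<in> ar L \<Longrightarrow> hom_arr K (fa H \<phi>) (fo H (dm L \<phi>)) (fo H (cd L \<phi>))"
    using HF unfolding is_functor_def by auto
  have fh: "\<And>\<phi>. \<phi> \<in> ar L \<Longrightarrow> hom_arr I (fa f \<phi>) (fo f (dm L \<phi>)) (fo f (cd L \<phi>))"
    using fF unfolding is_functor_def by auto
  have gh: "\<And>\<phi>. \<phi> \<in> ar L \<Longrightarrow> hom_arr J (fa g \<phi>) (fo g (dm L \<phi>)) (fo g (cd L \<phi>))"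
    using gF unfolding is_functor_def by auto
  have Fh: "\<And>\<phi>. \<phi> \<in> ar I \<Longrightarrow> hom_arr K (fa F \<phi>) (fo F (dm I \<phi>)) (fo F (cd I \<phi>))"
    using FF unfolding is_functor_def by auto
  have Gh: "\<And>\<phi>. \<phi> \<in> ar J \<Longrightarrow> hom_arr K (fa G \<phi>) (fo G (dm J \<phi>)) (fo G (cd J \<phi>))"
    using GF unfolding is_functor_def by auto
  define R where "R = {(fo f l, cmp K (\<beta> l) (inv_arr K (\<alpha> l)), fo g l) | l. l \<in> ob L}"
  have eq: "cmp K (cmp K (\<beta> (cd L \<phi>)) (inv_arr K (\<alpha> (cd L \<phi>)))) (fa F (fa f \<phi>))
      = cmp K (fa G (fa g \<phi>)) (cmp K (\<beta> (dm L \<phi>)) (inv_arr K (\<alpha> (dm L \<phi>))))" if "\<phi> \<in> ar L" for \<phi>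
  proof (rule key[OF C])
    show "hom_arr K (\<alpha> (dm L \<phi>)) (fo H (dm L \<phi>)) (fo F (fo f (dm L \<phi>)))" "is_iso K (\<alpha> (dm L \<phi>))"
      using ah Ldm that by auto
    show "hom_arr K (\<alpha> (cd L \<phi>)) (fo H (cd L \<phi>)) (fo F (fo f (cd L \<phi>)))" "is_iso K (\<alpha> (cd L \<phi>))"
      using ah Ldm that by auto
    show "hom_arr K (\<beta> (dm L \<phi>)) (fo H (dm L \<phi>)) (fo G (fo g (dm L \<phi>)))"
      using bh Ldm that by auto
    show "hom_arr K (\<beta> (cd L \<phi>)) (fo H (cd L \<phi>)) (fo G (fo g (cd L \<phi>)))"
      using bh Ldm that by auto
    show "hom_arr K (fa H \<phi>) (fo H (dm L \<phi>)) (fo H (cd L \<phi>))" using Hh that by auto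
    show "hom_arr K (fa F (fa f \<phi>)) (fo F (fo f (dm L \<phi>))) (fo F (fo f (cd L \<phi>)))"
      using Fh fh that unfolding hom_arr_def by auto
    show "hom_arr K (fa G (fa g \<phi>)) (fo G (fo g (dm L \<phi>))) (fo G (fo g (cd L \<phi>)))"
      using Gh gh that unfolding hom_arr_def by auto
    show "cmp K (\<alpha> (cd L \<phi>)) (fa H \<phi>) = cmp K (fa F (fa f \<phi>)) (\<alpha> (dm L \<phi>))" using an that .
    show "cmp K (\<beta> (cd L \<phi>)) (fa H \<phi>) = cmp K (fa G (fa g \<phi>)) (\<beta> (dm L \<phi>))" using bn that .
  qed
  have Rok: "hom_arr K (cmp K (\<beta> l) (inv_arr K (\<alpha> l))) (fo F (fo f l)) (fo G (fo g l)) \<and>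
      is_iso K (cmp K (\<beta> l) (inv_arr K (\<alpha> l)))" if "l \<in> ob L" for l
  proof -
    have a: "hom_arr K (\<alpha> l) (fo H l) (fo F (fo f l))" "is_iso K (\<alpha> l)" using ah that by auto
    have b: "hom_arr K (\<beta> l) (fo H l) (fo G (fo g l))" "is_iso K (\<beta> l)" using bh that by auto
    have ia: "hom_arr K (inv_arr K (\<alpha> l)) (fo F (fo f l)) (fo H l)"
      using inv_arr_props[OF a(2)] a(1) unfolding hom_arr_def by auto
    show ?thesis using cat_comp[OF C ia b(1)] comp_iso[OF C inv_iso[OF C a(2)] ia b(2) b(1)] by auto
  qed
  have fo_f: "\<And>l. l \<in> ob L \<Longrightarrow> fo f l \<in> ob I" using fF unfolding is_functor_def by auto
  have fo_g: "\<And>l. l \<in> ob L \<Longrightarrow> fo g l \<in> ob J" using gF unfolding is_functor_def by auto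
  have sf: "fo f ` ob L = ob I" and sg: "fo g ` ob L = ob J" using of og unfolding diag_open_def by auto
  have lf: "\<And>l b. l \<in> ob L \<Longrightarrow> b \<in> ar I \<Longrightarrow> dm I b = fo f l \<Longrightarrow> \<exists>\<phi>\<in>ar L. dm L \<phi> = l \<and> fa f \<phi> = b"
    using of unfolding diag_open_def by auto
  have lg: "\<And>l b. l \<in> ob L \<Longrightarrow> b \<in> ar J \<Longrightarrow> dm J b = fo g l \<Longrightarrow> \<exists>\<phi>\<in>ar L. dm L \<phi> = l \<and> fa g \<phi> = b"
    using og unfolding diag_open_def by auto
  show ?thesis unfolding bisimilar_def
  proof (intro exI[of _ R] conjI)
    show "\<forall>(i,\<eta>,j)\<in>R. i \<in> ob I \<and> j \<in> ob J \<and> hom_arr K \<eta> (fo F i) (fo G j) \<and> is_iso K \<eta>"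
      unfolding R_def using Rok fo_f fo_g by auto
    show "\<forall>i\<in>ob I. \<exists>\<eta> j. (i,\<eta>,j) \<in> R" unfolding R_def using sf by blast
    show "\<forall>j\<in>ob J. \<exists>i \<eta>. (i,\<eta>,j) \<in> R" unfolding R_def using sg by blast
    show "\<forall>(i,\<eta>,j)\<in>R. \<forall>\<phi>\<in>ar I. dm I \<phi> = i \<longrightarrow>
           (\<exists>\<eta>' j' \<psi>. (cd I \<phi>, \<eta>', j') \<in> R \<and> hom_arr J \<psi> j j' \<and>
               cmp K \<eta>' (fa F \<phi>) = cmp K (fa G \<psi>) \<eta>)"
    proof -
      { fix l \<phi> assume l: "l \<in> ob L" and \<phi>: "\<phi> \<in> ar I" "dm I \<phi> = fo f l"
      obtain \<phi>0 where p0: "\<phi>0 \<in> ar L" "dm L \<phi>0 = l" "fa f \<phi>0 = \<phi>" using lf[OF l \<phi>] by auto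
      have "cd I \<phi> = fo f (cd L \<phi>0)" using fh[OF p0(1)] p0 unfolding hom_arr_def by auto
      then have "\<exists>\<eta>' j' \<psi>. (cd I \<phi>, \<eta>', j') \<in> R \<and> hom_arr J \<psi> (fo g l) j' \<and>
               cmp K \<eta>' (fa F \<phi>) = cmp K (fa G \<psi>) (cmp K (\<beta> l) (inv_arr K (\<alpha> l)))"
        using eq[OF p0(1)] gh[OF p0(1)] p0 Ldm[OF p0(1)] unfolding R_def by blast }
      then show ?thesis unfolding R_def by blast
    qed
    show "\<forall>(i,\<eta>,j)\<in>R. \<forall>\<psi>\<in>ar J. dm J \<psi> = j \<longrightarrow>
           (\<exists>i' \<eta>' \<phi>. (i', \<eta>', cd J \<psi>) \<in> R \<and> hom_arr I \<phi> i i' \<and>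
               cmp K \<eta>' (fa F \<phi>) = cmp K (fa G \<psi>) \<eta>)"
    proof -
      { fix l \<psi> assume l: "l \<in> ob L" and \<psi>: "\<psi> \<in> ar J" "dm J \<psi> = fo g l"
      obtain \<phi>0 where p0: "\<phi>0 \<in> ar L" "dm L \<phi>0 = l" "fa g \<phi>0 = \<psi>" using lg[OF l \<psi>] by auto
      have "cd J \<psi> = fo g (cd L \<phi>0)" using gh[OF p0(1)] p0 unfolding hom_arr_def by auto
      then have "\<exists>i' \<eta>' \<phi>. (i', \<eta>', cd J \<psi>) \<in> R \<and> hom_arr I \<phi> (fo f l) i' \<and>
               cmp K \<eta>' (fa F \<phi>) = cmp K (fa G \<psi>) (cmp K (\<beta> l) (inv_arr K (\<alpha> l)))"
        using eq[OF p0(1)] fh[OF p0(1)] p0 Ldm[OF p0(1)] unfolding R_def by blast }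
      then show ?thesis unfolding R_def by blast
    qed
  qed
qed

theorem proposition5p5:
  fixes M :: "('o,'a) cat" and W Fib Cof :: "'a set"
    and Ho :: "('ho,'ha) cat" and h :: "('o,'a,'ho,'ha) ftor"
    and I :: "('i,'ia) cat" and F :: "('i,'ia,'o,'a) ftor"
    and J :: "('j,'ja) cat" and G :: "('j,'ja,'o,'a) ftor"
    and L :: "('l,'la) cat" and H :: "('l,'la,'o,'a) ftor"
    and f :: "('l,'la,'i,'ia) ftor" and \<mu> :: "'l \<Rightarrow> 'a"
    and g :: "('l,'la,'j,'ja) ftor" and \<nu> :: "'l \<Rightarrow> 'a"
  assumes "model_category M W Fib Cof"
    and "is_localization M W Ho h"
    and "is_diagram I M F" and "is_diagram J M G" and "is_diagram L M H"
    and "diag_morphism M L H I F f \<mu>" and "open_up_to_htpy M Ho h L H I F f \<mu>"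
    and "diag_morphism M L H J G g \<nu>" and "open_up_to_htpy M Ho h L H J G g \<nu>"
  shows "bisimilar_up_to_htpy M Ho h I F J G"
    using assms(7,9) unfolding open_up_to_htpy_def bisimilar_up_to_htpy_def
  by (meson span_bisim)

end
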